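(* Let $N_k=N\cup\{\Gamma\rightarrow E[x]_{p,q}\}$ and $N_{k+1}=N\cup\{\Gamma\{x\mapsto x'\},\Gamma\rightarrow E[x']_q\}$ be obtained by a Linear transformation. Let $N^\bot_{k+1}$ be a conflicting core of $N_{k+1}$, and let $(\Gamma\{x\mapsto x'\},\Gamma\rightarrow E[x']_q)\sigma_j$, $1\le j\le m$, be the clauses of $N^\bot_{k+1}$ that are instances of $\Gamma\{x\mapsto x'\},\Gamma\rightarrow E[x']_q$. If $x\sigma_j=x'\sigma_j$ for all $1\le j\le m$, then $$\big(N^\bot_{k+1}\setminus\{(\Gamma\{x\mapsto x'\},\Gamma\rightarrow E[x']_q)\sigma_j\mid 1\le j\le m\}\big)\cup\{(\Gamma\rightarrow E[x]_{p,q})\sigma_j\mid 1\le j\le m\}$$ is a conflicting core of $N_k$.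
   Context: First-order logic without equality. A clause is a finite multiset of literals written $\Gamma \rightarrow \Delta$. A Herbrand interpretation is a set of ground atoms; $I \models \Gamma\rightarrow\Delta$ iff for every grounding substitution $\sigma$, $\Delta\sigma\cap I\neq\emptyset$ or $\Gamma\sigma\not\subseteq I$. $E[x]_{p,q}$ denotes an atom with occurrences of variable $x$ at two different positions $p,q$, and $E[x']_q$ the atom obtained by replacing the occurrence at $q$ by $x'$. Linear transformation: $N\cup\{\Gamma\rightarrow E[x]_{p,q}\}\Rightarrow N\cup\{\Gamma\{x\mapsto x'\},\Gamma\rightarrow E[x']_q\}$ with $x'$ a fresh variable. A finite clause set $N^\bot$ is a conflicting core if for every substitution $\tau$ grounding all of $N^\bot$ (one substitution for the whole set, so variables are shared among clauses) the set $N^\bot\tau$ is unsatisfiable. $N^\bot$ is a conflicting core of $N$ if moreover every $C\in N^\bot$ equals $C'\sigma$ for some $C'\in N$ and substitution $\sigma$. *)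

theory Defs
  imports Main "HOL-Library.Multiset"
begin

datatype ('f, 'v) trm = Var 'v | Fun 'f "('f, 'v) trm list"

datatype ('p, 'f, 'v) atm = Atom 'p "('f, 'v) trm list"

text \<open>A clause Gamma -> Delta: a pair of finite multisets of atoms (antecedent, succedent).\<close>
type_synonym ('p, 'f, 'v) cls = "('p, 'f, 'v) atm multiset \<times> ('p, 'f, 'v) atm multiset"

type_synonym ('f, 'v) subst = "'v \<Rightarrow> ('f, 'v) trm"

fun vars_trm :: "('f, 'v) trm \<Rightarrow> 'v set" where
  "vars_trm (Var x) = {x}"
| "vars_trm (Fun f ts) = (\<Union>t\<in>set ts. vars_trm t)"

definition vars_atm :: "('p, 'f, 'v) atm \<Rightarrow> 'v set" where
  "vars_atm A = (case A of Atom P ts \<Rightarrow> (\<Union>t\<in>set ts. vars_trm t))"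

definition vars_cls :: "('p, 'f, 'v) cls \<Rightarrow> 'v set" where
  "vars_cls C = (\<Union>A\<in>set_mset (fst C) \<union> set_mset (snd C). vars_atm A)"

fun subst_trm :: "('f, 'v) subst \<Rightarrow> ('f, 'v) trm \<Rightarrow> ('f, 'v) trm" where
  "subst_trm \<sigma> (Var x) = \<sigma> x"
| "subst_trm \<sigma> (Fun f ts) = Fun f (map (subst_trm \<sigma>) ts)"

definition subst_atm :: "('f, 'v) subst \<Rightarrow> ('p, 'f, 'v) atm \<Rightarrow> ('p, 'f, 'v) atm" where
  "subst_atm \<sigma> A = (case A of Atom P ts \<Rightarrow> Atom P (map (subst_trm \<sigma>) ts))"

definition subst_cls :: "('f, 'v) subst \<Rightarrow> ('p, 'f, 'v) cls \<Rightarrow> ('p, 'f, 'v) cls" where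
  "subst_cls \<sigma> C = (image_mset (subst_atm \<sigma>) (fst C), image_mset (subst_atm \<sigma>) (snd C))"

definition ground_trm :: "('f, 'v) trm \<Rightarrow> bool" where
  "ground_trm t \<longleftrightarrow> vars_trm t = {}"

definition ground_atm :: "('p, 'f, 'v) atm \<Rightarrow> bool" where
  "ground_atm A \<longleftrightarrow> vars_atm A = {}"

definition grounding :: "('f, 'v) subst \<Rightarrow> ('p, 'f, 'v) cls \<Rightarrow> bool" where
  "grounding \<sigma> C \<longleftrightarrow> (\<forall>x\<in>vars_cls C. ground_trm (\<sigma> x))"

definition models :: "('p, 'f, 'v) atm set \<Rightarrow> ('p, 'f, 'v) cls \<Rightarrow> bool" where
  "models I C \<longleftrightarrow> (\<forall>\<sigma>. grounding \<sigma> C \<longrightarrow>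
      set_mset (image_mset (subst_atm \<sigma>) (snd C)) \<inter> I \<noteq> {}
    \<or> \<not> set_mset (image_mset (subst_atm \<sigma>) (fst C)) \<subseteq> I)"

definition satisfiable :: "('p, 'f, 'v) cls set \<Rightarrow> bool" where
  "satisfiable N \<longleftrightarrow> (\<exists>I. (\<forall>A\<in>I. ground_atm A) \<and> (\<forall>C\<in>N. models I C))"

definition conflicting_core :: "('p, 'f, 'v) cls set \<Rightarrow> bool" where
  "conflicting_core Nb \<longleftrightarrow> finite Nb \<and>
     (\<forall>\<tau>. (\<forall>C\<in>Nb. grounding \<tau> C) \<longrightarrow> \<not> satisfiable (subst_cls \<tau> ` Nb))"

definition conflicting_core_of :: "('p, 'f, 'v) cls set \<Rightarrow> ('p, 'f, 'v) cls set \<Rightarrow> bool" where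
  "conflicting_core_of Nb N \<longleftrightarrow> conflicting_core Nb \<and>
     (\<forall>C\<in>Nb. \<exists>C'\<in>N. \<exists>\<sigma>. C = subst_cls \<sigma> C')"

type_synonym pos = "nat list"

fun trm_at :: "('f, 'v) trm \<Rightarrow> pos \<Rightarrow> ('f, 'v) trm option" where
  "trm_at t [] = Some t"
| "trm_at (Var x) (i # p) = None"
| "trm_at (Fun f ts) (i # p) = (if i < length ts then trm_at (ts ! i) p else None)"

text \<open>Positions in an atom: the first index selects the argument of the predicate.\<close>
fun atm_at :: "('p, 'f, 'v) atm \<Rightarrow> pos \<Rightarrow> ('f, 'v) trm option" where
  "atm_at (Atom P ts) [] = None"
| "atm_at (Atom P ts) (i # p) = (if i < length ts then trm_at (ts ! i) p else None)"

fun trm_repl :: "('f, 'v) trm \<Rightarrow> pos \<Rightarrow> ('f, 'v) trm \<Rightarrow> ('f, 'v) trm" where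
  "trm_repl t [] s = s"
| "trm_repl (Var x) (i # p) s = Var x"
| "trm_repl (Fun f ts) (i # p) s =
     (if i < length ts then Fun f (ts[i := trm_repl (ts ! i) p s]) else Fun f ts)"

fun atm_repl :: "('p, 'f, 'v) atm \<Rightarrow> pos \<Rightarrow> ('f, 'v) trm \<Rightarrow> ('p, 'f, 'v) atm" where
  "atm_repl (Atom P ts) [] s = Atom P ts"
| "atm_repl (Atom P ts) (i # p) s =
     (if i < length ts then Atom P (ts[i := trm_repl (ts ! i) p s]) else Atom P ts)"

end

theory Submission
  imports Defs
begin

lemma trm_repl_subst:
  "trm_at t q = Some (Var x) \<Longrightarrow> \<sigma> x' = \<sigma> x \<Longrightarrow>
   subst_trm \<sigma> (trm_repl t q (Var x')) = subst_trm \<sigma> t"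
proof (induction q arbitrary: t)
  case Nil then show ?case by auto
next
  case (Cons i p)
  then obtain f ts where t: "t = Fun f ts" and i: "i < length ts"
    by (cases t) (auto split: if_splits)
  with Cons have "subst_trm \<sigma> (trm_repl (ts ! i) p (Var x')) = subst_trm \<sigma> (ts ! i)"
    by auto
  moreover have "(map (subst_trm \<sigma>) ts)[i := subst_trm \<sigma> (ts ! i)] = map (subst_trm \<sigma>) ts"
    by (metis i list_update_id nth_map)
  ultimately show ?case using t i by (simp add: map_update)
qed

lemma atm_repl_subst:
  "atm_at E q = Some (Var x) \<Longrightarrow> \<sigma> x' = \<sigma> x \<Longrightarrow>
   subst_atm \<sigma> (atm_repl E q (Var x')) = subst_atm \<sigma> E"
proof -
  assume a: "atm_at E q = Some (Var x)" and b: "\<sigma> x' = \<sigma> x"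
  obtain P ts where E: "E = Atom P ts" by (cases E)
  obtain i p where q: "q = i # p" using a E by (cases q) auto
  have i: "i < length ts" using a E q by (auto split: if_splits)
  have "subst_trm \<sigma> (trm_repl (ts ! i) p (Var x')) = subst_trm \<sigma> (ts ! i)"
    using a E q i b by (auto intro: trm_repl_subst)
  moreover have "(map (subst_trm \<sigma>) ts)[i := subst_trm \<sigma> (ts ! i)] = map (subst_trm \<sigma>) ts"
    by (metis i list_update_id nth_map)
  ultimately show ?thesis using E q i by (simp add: subst_atm_def map_update)
qed

lemma subst_trm_upd: "\<sigma> x' = \<sigma> x \<Longrightarrow>
   subst_trm \<sigma> (subst_trm (Var(x := Var x')) t) = subst_trm \<sigma> t"
  by (induction t) auto

lemma subst_atm_upd: "\<sigma> x' = \<sigma> x \<Longrightarrow>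
   subst_atm \<sigma> (subst_atm (Var(x := Var x')) A) = subst_atm \<sigma> A"
  by (cases A) (auto simp: subst_atm_def subst_trm_upd)

lemma same_sets:
  assumes "set_mset (fst C1) = set_mset (fst C2)" "snd C1 = snd C2"
  shows "vars_cls C1 = vars_cls C2" "models I C1 = models I C2"
    "set_mset (fst (subst_cls t C1)) = set_mset (fst (subst_cls t C2))"
    "snd (subst_cls t C1) = snd (subst_cls t C2)"
  using assms by (auto simp: vars_cls_def models_def grounding_def subst_cls_def)

lemma same_sets_grounding:
  assumes "set_mset (fst C1) = set_mset (fst C2)" "snd C1 = snd C2"
  shows "grounding t C1 = grounding t C2"
  using same_sets(1)[OF assms] by (simp add: grounding_def)

theorem lemma8:
  fixes N Nb :: "('p, 'f, 'v) cls set"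
    and \<Gamma> :: "('p, 'f, 'v) atm multiset"
    and E :: "('p, 'f, 'v) atm"
    and x x' :: 'v and p q :: pos
    and \<sigma> :: "nat \<Rightarrow> ('f, 'v) subst" and m :: nat
  assumes "p \<noteq> q"
    and "atm_at E p = Some (Var x)" and "atm_at E q = Some (Var x)"
    and "x' \<notin> vars_cls (\<Gamma>, {#E#})"
    and "conflicting_core_of Nb
           (N \<union> {(image_mset (subst_atm (Var(x := Var x'))) \<Gamma> + \<Gamma>, {#atm_repl E q (Var x')#})})"
    and "{C \<in> Nb. \<exists>\<tau>. C = subst_cls \<tau>
             (image_mset (subst_atm (Var(x := Var x'))) \<Gamma> + \<Gamma>, {#atm_repl E q (Var x')#})}
         = {subst_cls (\<sigma> j)
             (image_mset (subst_atm (Var(x := Var x'))) \<Gamma> + \<Gamma>, {#atm_repl E q (Var x')#})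
            | j. 1 \<le> j \<and> j \<le> m}"
    and "\<forall>j. 1 \<le> j \<and> j \<le> m \<longrightarrow> \<sigma> j x = \<sigma> j x'"
  shows "conflicting_core_of
           ((Nb - {subst_cls (\<sigma> j)
                     (image_mset (subst_atm (Var(x := Var x'))) \<Gamma> + \<Gamma>, {#atm_repl E q (Var x')#})
                   | j. 1 \<le> j \<and> j \<le> m})
            \<union> {subst_cls (\<sigma> j) (\<Gamma>, {#E#}) | j. 1 \<le> j \<and> j \<le> m})
           (N \<union> {(\<Gamma>, {#E#})})"
proof -
  define C' where "C' = (image_mset (subst_atm (Var(x := Var x'))) \<Gamma> + \<Gamma>, {#atm_repl E q (Var x')#})"
  define C where "C = (\<Gamma>, {#E#})"
  define S where "S = {subst_cls (\<sigma> j) C' | j. 1 \<le> j \<and> j \<le> m}"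
  define T where "T = {subst_cls (\<sigma> j) C | j. 1 \<le> j \<and> j \<le> m}"
  have core: "conflicting_core_of Nb (N \<union> {C'})" using assms(5) C'_def by simp
  have Seq: "{D \<in> Nb. \<exists>\<tau>. D = subst_cls \<tau> C'} = S" using assms(6) C'_def S_def by simp
  have rel: "set_mset (fst (subst_cls (\<sigma> j) C')) = set_mset (fst (subst_cls (\<sigma> j) C))
          \<and> snd (subst_cls (\<sigma> j) C') = snd (subst_cls (\<sigma> j) C)"
    if "1 \<le> j" "j \<le> m" for j
  proof -
    have e: "\<sigma> j x' = \<sigma> j x" using assms(7) that by auto
    have h1: "image_mset (subst_atm (\<sigma> j)) (image_mset (subst_atm (Var(x := Var x'))) \<Gamma>)
        = image_mset (subst_atm (\<sigma> j)) \<Gamma>"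
    proof -
      have "subst_atm (\<sigma> j) \<circ> subst_atm (Var(x := Var x')) = subst_atm (\<sigma> j)"
        (is "?l = ?r") using subst_atm_upd[OF e] by (intro ext) (simp only: comp_apply)
      have "image_mset (subst_atm (\<sigma> j)) (image_mset (subst_atm (Var(x := Var x'))) \<Gamma>) = image_mset ?l \<Gamma>"
        by (rule multiset.map_comp)
      also have "\<dots> = image_mset ?r \<Gamma>" unfolding \<open>?l = ?r\<close> by (rule refl)
      finally show ?thesis .
    qed
    show ?thesis unfolding C'_def C_def subst_cls_def
      using atm_repl_subst[OF assms(3) e] h1 by simp
  qed
  have SNb: "S \<subseteq> Nb" using Seq by blast
  have finT: "finite T" unfolding T_def
  proof -
    have "{subst_cls (\<sigma> j) C | j. 1 \<le> j \<and> j \<le> m} = (\<lambda>j. subst_cls (\<sigma> j) C) ` {1..m}" by auto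
    then show "finite {subst_cls (\<sigma> j) C | j. 1 \<le> j \<and> j \<le> m}" by simp
  qed
  have finNb: "finite Nb" using core by (simp add: conflicting_core_of_def conflicting_core_def)
  have unsat: "\<And>\<tau>. (\<forall>D\<in>Nb. grounding \<tau> D) \<Longrightarrow> \<not> satisfiable (subst_cls \<tau> ` Nb)"
    using core by (simp add: conflicting_core_of_def conflicting_core_def)
  have cc: "conflicting_core ((Nb - S) \<union> T)"
    unfolding conflicting_core_def
  proof (intro conjI allI impI)
    show "finite (Nb - S \<union> T)" using finNb finT by simp
  next
    fix \<tau> assume g: "\<forall>D\<in>Nb - S \<union> T. grounding \<tau> D"
    have "\<forall>D\<in>Nb. grounding \<tau> D"
    proof
      fix D assume "D \<in> Nb"
      show "grounding \<tau> D"
      proof (cases "D \<in> S")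
        case True
        then obtain j where j: "1 \<le> j" "j \<le> m" "D = subst_cls (\<sigma> j) C'" unfolding S_def by auto
        have "subst_cls (\<sigma> j) C \<in> T" using j unfolding T_def by auto
        then have "grounding \<tau> (subst_cls (\<sigma> j) C)" using g by blast
        then show ?thesis using same_sets_grounding[of "subst_cls (\<sigma> j) C'" "subst_cls (\<sigma> j) C" \<tau>]
          rel[OF j(1,2)] j(3) by simp
      next
        case False then show ?thesis using g \<open>D \<in> Nb\<close> by auto
      qed
    qed
    then have ns: "\<not> satisfiable (subst_cls \<tau> ` Nb)" by (rule unsat)
    show "\<not> satisfiable (subst_cls \<tau> ` (Nb - S \<union> T))"
    proof
      assume "satisfiable (subst_cls \<tau> ` (Nb - S \<union> T))"
      then obtain I where I: "\<forall>A\<in>I. ground_atm A" "\<forall>D\<in>Nb - S \<union> T. models I (subst_cls \<tau> D)"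
        unfolding satisfiable_def by auto
      have "\<forall>D\<in>Nb. models I (subst_cls \<tau> D)"
      proof
        fix D assume "D \<in> Nb"
        show "models I (subst_cls \<tau> D)"
        proof (cases "D \<in> S")
          case True
          then obtain j where j: "1 \<le> j" "j \<le> m" "D = subst_cls (\<sigma> j) C'" unfolding S_def by auto
          have "subst_cls (\<sigma> j) C \<in> T" using j unfolding T_def by auto
          then have "models I (subst_cls \<tau> (subst_cls (\<sigma> j) C))" using I by auto
          moreover have "models I (subst_cls \<tau> (subst_cls (\<sigma> j) C')) = models I (subst_cls \<tau> (subst_cls (\<sigma> j) C))"
            using rel[OF j(1,2)] same_sets(2)[of "subst_cls \<tau> (subst_cls (\<sigma> j) C')" "subst_cls \<tau> (subst_cls (\<sigma> j) C)" I]
              same_sets(3,4)[of "subst_cls (\<sigma> j) C'" "subst_cls (\<sigma> j) C" \<tau>] by simp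
          ultimately show ?thesis using j by simp
        next
          case False then show ?thesis using I \<open>D \<in> Nb\<close> by auto
        qed
      qed
      then show False using ns I(1) unfolding satisfiable_def by auto
    qed
  qed
  have inst: "\<forall>D\<in>(Nb - S) \<union> T. \<exists>C''\<in>N \<union> {C}. \<exists>\<rho>. D = subst_cls \<rho> C''"
  proof
    fix D assume D: "D \<in> (Nb - S) \<union> T"
    show "\<exists>C''\<in>N \<union> {C}. \<exists>\<rho>. D = subst_cls \<rho> C''"
    proof (cases "D \<in> T")
      case True then show ?thesis unfolding T_def by auto
    next
      case False
      then have "D \<in> Nb" "D \<notin> S" using D by auto
      then obtain C'' \<rho> where "C'' \<in> N \<union> {C'}" "D = subst_cls \<rho> C''"
        using core unfolding conflicting_core_of_def by blast
      moreover have "C'' \<noteq> C'" using Seq \<open>D \<in> Nb\<close> \<open>D \<notin> S\<close> calculation by blast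
      ultimately show ?thesis by auto
    qed
  qed
  show ?thesis using cc inst unfolding conflicting_core_of_def S_def T_def C'_def C_def by simp
qed

end
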